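(* Let $\mathcal A$ be a linearly ordered $\mathbf{UL}_\omega$-algebra. Let $B\subseteq A$ be finite with $\{e,f,\bot,\top\}\subseteq B$, and let $D$ be as described in the context. Then $D$ is finite.
   Context: A $\mathbf{UL}$-algebra is a structure $\langle A,\wedge,\vee,\cdot,\to,e,f,\bot,\top\rangle$ such that: - it is a bounded lattice; - $\langle A,\cdot,e\rangle$ is a commutative monoid; - $xy\le z$ iff $y\le x\to z$; - for all $x,y,u,v$: $\lambda_u((x\vee y)\to x)\vee\lambda_v((x\vee y)\to y)=e$, where $\lambda_a(b)=(a\to ba)\wedge e$. A $\mathbf{UL}_\omega$-algebra additionally satisfies $x\to e=x^2\to e$ for all $x$. This class includes $\mathbf{IUL}_\omega$-algebras. Construction. $M$ is the submonoid of $\langle A,\cdot,e\rangle$ generated by $B$. For $a\in M$ and $b\in B$, put $(a\mapsto b]=\{c\in M:ac\le b\}$. Let $\bar D=\{(a\mapsto b]:a\in M,b\in B\}$ and $D=\{\bigcap\chi:\chi\subseteq\bar D\}$, with the empty intersection equal to $M$. *)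

theory Defs
  imports Main
begin

text \<open>An algebra A = (A, inf, sup, mult, imp, e, f, bot, top): the bounded-lattice reduct is the
  type class structure of the carrier type 'a (carrier = UNIV); the lattice order is the
  class order.\<close>

definition lam :: "('a \<Rightarrow> 'a \<Rightarrow> 'a) \<Rightarrow> ('a \<Rightarrow> 'a \<Rightarrow> 'a) \<Rightarrow> 'a::lattice \<Rightarrow> 'a \<Rightarrow> 'a \<Rightarrow> 'a" where
  "lam mult imp e a b = inf (imp a (mult b a)) e"

definition UL_algebra ::
  "('a::bounded_lattice \<Rightarrow> 'a \<Rightarrow> 'a) \<Rightarrow> ('a \<Rightarrow> 'a \<Rightarrow> 'a) \<Rightarrow> 'a \<Rightarrow> 'a \<Rightarrow> bool" where
  "UL_algebra mult imp e f \<longleftrightarrow>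
     (\<forall>x y z. mult (mult x y) z = mult x (mult y z)) \<and>
     (\<forall>x y. mult x y = mult y x) \<and>
     (\<forall>x. mult e x = x) \<and>
     (\<forall>x y z. mult x y \<le> z \<longleftrightarrow> y \<le> imp x z) \<and>
     (\<forall>x y u v. sup (lam mult imp e u (imp (sup x y) x)) (lam mult imp e v (imp (sup x y) y)) = e)"

definition UL_omega_algebra ::
  "('a::bounded_lattice \<Rightarrow> 'a \<Rightarrow> 'a) \<Rightarrow> ('a \<Rightarrow> 'a \<Rightarrow> 'a) \<Rightarrow> 'a \<Rightarrow> 'a \<Rightarrow> bool" where
  "UL_omega_algebra mult imp e f \<longleftrightarrow>
     UL_algebra mult imp e f \<and> (\<forall>x. imp x e = imp (mult x x) e)"

inductive_set gen_monoid :: "('a \<Rightarrow> 'a \<Rightarrow> 'a) \<Rightarrow> 'a \<Rightarrow> 'a set \<Rightarrow> 'a set"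
  for mult e B where
    unit: "e \<in> gen_monoid mult e B"
  | gen: "b \<in> B \<Longrightarrow> b \<in> gen_monoid mult e B"
  | mult: "a \<in> gen_monoid mult e B \<Longrightarrow> c \<in> gen_monoid mult e B \<Longrightarrow> mult a c \<in> gen_monoid mult e B"

definition res_set :: "('a::order \<Rightarrow> 'a \<Rightarrow> 'a) \<Rightarrow> 'a \<Rightarrow> 'a set \<Rightarrow> 'a \<Rightarrow> 'a \<Rightarrow> 'a set" where
  "res_set mult e B a b = {c \<in> gen_monoid mult e B. mult a c \<le> b}"

definition Dbar :: "('a::order \<Rightarrow> 'a \<Rightarrow> 'a) \<Rightarrow> 'a \<Rightarrow> 'a set \<Rightarrow> 'a set set" where
  "Dbar mult e B = {res_set mult e B a b | a b. a \<in> gen_monoid mult e B \<and> b \<in> B}"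

text \<open>D = intersections of subfamilies of Dbar, empty intersection being M
  (intersecting with M realises this convention; all members of Dbar are subsets of M).\<close>
definition Dset :: "('a::order \<Rightarrow> 'a \<Rightarrow> 'a) \<Rightarrow> 'a \<Rightarrow> 'a set \<Rightarrow> 'a set set" where
  "Dset mult e B = {gen_monoid mult e B \<inter> \<Inter>\<chi> | \<chi>. \<chi> \<subseteq> Dbar mult e B}"

end

theory Submission
  imports Defs "HOL-Library.Multiset" "HOL-Library.Ramsey"
begin

lemma ramsey_subseq:
  fixes g :: "nat \<Rightarrow> nat \<Rightarrow> 'c"
  assumes C: "finite C" and gC: "\<And>i j. i < j \<Longrightarrow> g i j \<in> C"
  obtains r :: "nat \<Rightarrow> nat" and c where "strict_mono r" "\<And>i j. i < j \<Longrightarrow> g (r i) (r j) = c"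
proof -
  obtain h :: "'c \<Rightarrow> nat" and n :: nat where hn: "h ` C = {i. i < n}" "inj_on h C"
    using finite_imp_inj_to_nat_seg[OF C] by blast
  define f where "f X = h (g (Min X) (Max X))" for X :: "nat set"
  have part: "\<forall>x\<in>(UNIV::nat set). \<forall>y\<in>UNIV. x \<noteq> y \<longrightarrow> f {x, y} < n"
  proof (intro ballI impI)
    fix x y :: nat assume "x \<noteq> y"
    then have "min x y < max x y" by auto
    then have "g (min x y) (max x y) \<in> C" by (rule gC)
    then have "h (g (min x y) (max x y)) < n" using hn by auto
    then show "f {x,y} < n" by (simp add: f_def)
  qed
  obtain Y t where Y: "infinite Y" "\<forall>x\<in>Y. \<forall>y\<in>Y. x \<noteq> y \<longrightarrow> f {x, y} = t"
    using Ramsey2[OF infinite_UNIV_nat part] by blast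
  define r where "r = enumerate Y"
  have sm: "strict_mono r" using Y(1) by (simp add: r_def strict_mono_enumerate)
  have rin: "r i \<in> Y" for i using Y(1) by (simp add: r_def enumerate_in_set)
  have key: "h (g (r i) (r j)) = t" if "i < j" for i j
  proof -
    have lt: "r i < r j" using sm that by (simp add: strict_mono_less)
    then have "f {r i, r j} = h (g (r i) (r j))" by (simp add: f_def min_def max_def)
    moreover have "f {r i, r j} = t" using Y(2) rin lt by auto
    ultimately show ?thesis by simp
  qed
  have "g (r i) (r j) = g (r 0) (r 1)" if "i < j" for i j
  proof -
    have "r i < r j" "r 0 < r 1" using sm that by (auto simp add: strict_mono_less)
    then have "g (r i) (r j) \<in> C" "g (r 0) (r 1) \<in> C" using gC by auto
    moreover have "h (g (r i) (r j)) = h (g (r 0) (r 1))" using key[OF that] key[of 0 1] by simp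
    ultimately show ?thesis using hn(2) by (meson inj_onD)
  qed
  then show ?thesis using that sm by blast
qed

lemma nat_no_strict_decr:
  fixes f :: "nat \<Rightarrow> nat"
  assumes "\<And>i j. i < j \<Longrightarrow> f j < f i"
  shows False
proof -
  have "f n + n \<le> f 0" for n
  proof (induction n)
    case 0 then show ?case by simp
  next
    case (Suc n)
    have "f (Suc n) < f n" using assms by simp
    then show ?case using Suc by simp
  qed
  from this[of "Suc (f 0)"] show False by simp
qed

locale ULW =
  fixes mult :: "'a::bounded_lattice \<Rightarrow> 'a \<Rightarrow> 'a" and imp :: "'a \<Rightarrow> 'a \<Rightarrow> 'a" and e :: 'a
  assumes assoc: "mult (mult x y) z = mult x (mult y z)"
    and comm: "mult x y = mult y x"
    and unit: "mult e x = x"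
    and res: "mult x y \<le> z \<longleftrightarrow> y \<le> imp x z"
    and omega: "imp x e = imp (mult x x) e"
    and lin: "x \<le> y \<or> y \<le> x"
begin

lemma cm: "comm_monoid mult e"
proof
  fix a b c
  show "mult (mult a b) c = mult a (mult b c)" by (rule assoc)
  show "mult a b = mult b a" by (rule comm)
  show "mult a e = a" using comm[of a e] unit[of a] by (rule trans)
qed

interpretation MS: comm_monoid_mset mult e
  by (simp add: cm comm_monoid_mset.intro)

abbreviation P :: "'a multiset \<Rightarrow> 'a" where "P \<equiv> MS.F"

lemma mono: assumes "x \<le> y" shows "mult z x \<le> mult z y"
proof -
  have "y \<le> imp z (mult z y)" using res[of z y "mult z y"] by simp
  then have "x \<le> imp z (mult z y)" using assms by (rule order.trans[rotated])
  then show ?thesis using res[of z x "mult z y"] by simp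
qed

lemma omega2: "mult x y \<le> e \<longleftrightarrow> mult (mult x x) y \<le> e"
  using res[of x y e] res[of "mult x x" y e] omega[of x] by simp

lemma supp_aux: "mult (P X) d \<le> e \<longleftrightarrow> mult (P (mset_set (set_mset X))) d \<le> e"
proof (induction "size X" arbitrary: X rule: less_induct)
  case less
  show ?case
  proof (cases "\<exists>x. 2 \<le> count X x")
    case True
    then obtain x where x: "2 \<le> count X x" by blast
    then have c0: "0 < count X x" by linarith
    have "x \<in># X" using c0 count_greater_zero_iff by metis
    define X' where "X' = X - {#x#}"
    have XX: "X = add_mset x X'" using \<open>x \<in># X\<close> by (simp add: X'_def)
    have "count X' x = count X x - 1" by (simp add: X'_def)
    then have c1: "0 < count X' x" using x by linarith
    have "x \<in># X'" using c1 count_greater_zero_iff by metis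
    then obtain R where R: "X' = add_mset x R" by (metis multi_member_split)
    have s: "set_mset X' = set_mset X" using XX \<open>x \<in># X'\<close> by auto
    have sz: "size X' < size X" using XX by simp
    have "mult (P X) d = mult (mult x x) (mult (P R) d)"
      by (simp add: XX R assoc)
    moreover have "mult (P X') d = mult x (mult (P R) d)"
      by (simp add: R assoc)
    ultimately have "mult (P X) d \<le> e \<longleftrightarrow> mult (P X') d \<le> e"
      using omega2[of x "mult (P R) d"] by (simp only:)
    with less[OF sz] s show ?thesis by simp
  next
    case False
    have "count X y = count (mset_set (set_mset X)) y" for y
    proof (cases "y \<in># X")
      case True
      then have "0 < count X y" by simp
      moreover have "count X y < 2" using False by (simp add: not_le)
      ultimately have "count X y = 1" by linarith
      then show ?thesis using True by (simp add: count_mset_set)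
    next
      case False
      then show ?thesis by (simp add: count_mset_set not_in_iff)
    qed
    then have "X = mset_set (set_mset X)" by (rule multiset_eqI)
    then show ?thesis by simp
  qed
qed

lemma supp: "set_mset X = set_mset Y \<Longrightarrow> P X \<le> e \<longleftrightarrow> P Y \<le> e"
  using supp_aux[of X e] supp_aux[of Y e] by (simp add: comm[of _ e] unit)


lemma gen_char: "gen_monoid mult e B = {P X | X. set_mset X \<subseteq> B}"
proof
  show "gen_monoid mult e B \<subseteq> {P X | X. set_mset X \<subseteq> B}"
  proof
    fix a assume "a \<in> gen_monoid mult e B"
    then show "a \<in> {P X | X. set_mset X \<subseteq> B}"
    proof induction
      case unit
      then show ?case by (rule CollectI, rule exI[of _ "{#}"]) simp
    next
      case (gen b)
      then show ?case by (intro CollectI exI[of _ "{#b#}"]) simp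
    next
      case (mult a c)
      then obtain X Y where "a = P X" "set_mset X \<subseteq> B" "c = P Y" "set_mset Y \<subseteq> B" by blast
      then show ?case by (intro CollectI exI[of _ "X + Y"]) simp
    qed
  qed
next
  show "{P X | X. set_mset X \<subseteq> B} \<subseteq> gen_monoid mult e B"
  proof clarify
    fix X assume "set_mset X \<subseteq> B"
    then show "P X \<in> gen_monoid mult e B"
    proof (induction X)
      case empty
      then show ?case by (simp add: gen_monoid.unit)
    next
      case (add x X)
      then show ?case by (simp add: gen_monoid.gen gen_monoid.mult)
    qed
  qed
qed

lemma unit_r: "mult x e = x"
  by (simp add: comm[of x e] unit)

lemma chain:
  "res_set mult e B a b \<subseteq> res_set mult e B a' b \<or> res_set mult e B a' b \<subseteq> res_set mult e B a b"
proof (rule ccontr)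
  assume "\<not> ?thesis"
  then obtain c c' where c: "c \<in> gen_monoid mult e B" "mult a c \<le> b" "\<not> mult a' c \<le> b"
    and c': "c' \<in> gen_monoid mult e B" "mult a' c' \<le> b" "\<not> mult a c' \<le> b"
    unfolding res_set_def by blast
  show False
  proof (cases "c \<le> c'")
    case True
    then have "mult a' c \<le> mult a' c'" by (rule mono)
    then show False using c c' order_trans by blast
  next
    case False
    then have "c' \<le> c" using lin by blast
    then have "mult a c' \<le> mult a c" by (rule mono)
    then show False using c c' order_trans by blast
  qed
qed

lemma no_pattern:
  fixes a d :: "nat \<Rightarrow> 'a"
  assumes B: "finite B" and aG: "\<And>i. a i \<in> gen_monoid mult e B" and dG: "\<And>i. d i \<in> gen_monoid mult e B"
    and pat: "(\<forall>i j. mult (a j) (d i) \<le> b \<longleftrightarrow> i < j) \<or> (\<forall>i j. mult (a j) (d i) \<le> b \<longleftrightarrow> j \<le> i)"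
  shows False
proof -
  have "\<forall>i. \<exists>X. a i = P X \<and> set_mset X \<subseteq> B"
  proof
    fix i show "\<exists>X. a i = P X \<and> set_mset X \<subseteq> B" using aG[of i] unfolding gen_char by (simp add: eq_commute)
  qed
  from choice[OF this] obtain X where X0: "\<forall>i. a i = P (X i) \<and> set_mset (X i) \<subseteq> B" by (elim exE)
  then have X: "\<And>i. a i = P (X i)" "\<And>i. set_mset (X i) \<subseteq> B" by simp_all
  have "\<forall>i. \<exists>Y. d i = P Y \<and> set_mset Y \<subseteq> B"
  proof
    fix i show "\<exists>Y. d i = P Y \<and> set_mset Y \<subseteq> B" using dG[of i] unfolding gen_char by (simp add: eq_commute)
  qed
  from choice[OF this] obtain Y where Y0: "\<forall>i. d i = P (Y i) \<and> set_mset (Y i) \<subseteq> B" by (elim exE)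
  then have Y: "\<And>i. d i = P (Y i)" "\<And>i. set_mset (Y i) \<subseteq> B" by simp_all
  define g where "g i j = ({x\<in>B. count (X i) x \<le> count (X j) x}, {x\<in>B. count (X i) x < count (X j) x},
     {x\<in>B. count (Y i) x \<le> count (Y j) x}, {x\<in>B. count (Y i) x < count (Y j) x})" for i j :: nat
  have fC: "finite (Pow B \<times> Pow B \<times> Pow B \<times> Pow B)" using B by simp
  have gC: "g i j \<in> Pow B \<times> Pow B \<times> Pow B \<times> Pow B" if "i < j" for i j by (auto simp: g_def)
  obtain r :: "nat \<Rightarrow> nat" and cc where r: "strict_mono r" and hom: "\<And>i j. i < j \<Longrightarrow> g (r i) (r j) = cc"
  proof (rule ramsey_subseq[OF fC gC])
    fix r0 :: "nat \<Rightarrow> nat" and c0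
    assume h1: "strict_mono r0" and h2: "\<And>i j. i < j \<Longrightarrow> g (r0 i) (r0 j) = c0"
    show thesis by (rule that[OF h1 h2])
  qed
  obtain L1 S L2 T where cc: "cc = (L1, S, L2, T)" by (cases cc) auto
  define X' where "X' i = X (r i)" for i
  define Y' where "Y' i = Y (r i)" for i
  have homX1: "{x\<in>B. count (X' i) x \<le> count (X' j) x} = L1" and
       homX2: "{x\<in>B. count (X' i) x < count (X' j) x} = S" and
       homY1: "{x\<in>B. count (Y' i) x \<le> count (Y' j) x} = L2" and
       homY2: "{x\<in>B. count (Y' i) x < count (Y' j) x} = T" if "i < j" for i j
    using hom[OF that] unfolding cc g_def X'_def Y'_def by simp_all
  have X'B: "set_mset (X' i) \<subseteq> B" for i using X(2) by (simp add: X'_def)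
  have Y'B: "set_mset (Y' i) \<subseteq> B" for i using Y(2) by (simp add: Y'_def)
  have L1B: "B \<subseteq> L1"
  proof
    fix x assume xB: "x \<in> B"
    show "x \<in> L1"
    proof (rule ccontr)
      assume "x \<notin> L1"
      then have "count (X' j) x < count (X' i) x" if "i < j" for i j
      proof -
        have "x \<notin> {y\<in>B. count (X' i) y \<le> count (X' j) y}" using homX1[OF that] \<open>x \<notin> L1\<close> by simp
        then show ?thesis using xB by (simp add: not_le)
      qed
      then show False using nat_no_strict_decr[of "\<lambda>i. count (X' i) x"] by blast
    qed
  qed
  have L2B: "B \<subseteq> L2"
  proof
    fix x assume xB: "x \<in> B"
    show "x \<in> L2"
    proof (rule ccontr)
      assume "x \<notin> L2"
      then have "count (Y' j) x < count (Y' i) x" if "i < j" for i j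
      proof -
        have "x \<notin> {y\<in>B. count (Y' i) y \<le> count (Y' j) y}" using homY1[OF that] \<open>x \<notin> L2\<close> by simp
        then show ?thesis using xB by (simp add: not_le)
      qed
      then show False using nat_no_strict_decr[of "\<lambda>i. count (Y' i) x"] by blast
    qed
  qed
  have cX: "count (X' i) x \<le> count (X' j) x" if "i < j" for i j x
  proof (cases "x \<in> B")
    case True
    then have "x \<in> {y\<in>B. count (X' i) y \<le> count (X' j) y}" using homX1[OF that] L1B by blast
    then show ?thesis by simp
  next
    case False then have "x \<notin># X' i" using X'B by auto
    then show ?thesis by (simp add: not_in_iff)
  qed
  have cY: "count (Y' i) x \<le> count (Y' j) x" if "i < j" for i j x
  proof (cases "x \<in> B")
    case True
    then have "x \<in> {y\<in>B. count (Y' i) y \<le> count (Y' j) y}" using homY1[OF that] L2B by blast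
    then show ?thesis by simp
  next
    case False then have "x \<notin># Y' i" using Y'B by auto
    then show ?thesis by (simp add: not_in_iff)
  qed
  have sX: "set_mset (X' j - X' i) = S" if "i < j" for i j
  proof -
    have "set_mset (X' j - X' i) = {x. count (X' i) x < count (X' j) x}"
      by (auto simp: in_diff_count)
    also have "\<dots> = {x\<in>B. count (X' i) x < count (X' j) x}"
    proof (intro Collect_cong iffI conjI)
      fix x assume h: "count (X' i) x < count (X' j) x"
      then have c2: "0 < count (X' j) x" by linarith
      have "x \<in># X' j" using c2 count_greater_zero_iff by metis
      then show "x \<in> B" using X'B[of j] by blast
      show "count (X' i) x < count (X' j) x" by (rule h)
    qed auto
    finally show ?thesis using homX2[OF that] by simp
  qed
  have sY: "set_mset (Y' j - Y' i) = T" if "i < j" for i j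
  proof -
    have "set_mset (Y' j - Y' i) = {x. count (Y' i) x < count (Y' j) x}"
      by (auto simp: in_diff_count)
    also have "\<dots> = {x\<in>B. count (Y' i) x < count (Y' j) x}"
    proof (intro Collect_cong iffI conjI)
      fix x assume h: "count (Y' i) x < count (Y' j) x"
      then have c2: "0 < count (Y' j) x" by linarith
      have "x \<in># Y' j" using c2 count_greater_zero_iff by metis
      then show "x \<in> B" using Y'B[of j] by blast
      show "count (Y' i) x < count (Y' j) x" by (rule h)
    qed auto
    finally show ?thesis using homY2[OF that] by simp
  qed
  have decomp: "X' j2 + Y' i2 = (X' j1 + Y' i1) + ((X' j2 - X' j1) + (Y' i2 - Y' i1))"
    if "j1 < j2" "i1 < i2" for j1 j2 i1 i2
  proof (rule multiset_eqI)
    fix x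
    have h1: "count (X' j1) x \<le> count (X' j2) x" by (rule cX[OF that(1)])
    have h2: "count (Y' i1) x \<le> count (Y' i2) x" by (rule cY[OF that(2)])
    show "count (X' j2 + Y' i2) x = count ((X' j1 + Y' i1) + ((X' j2 - X' j1) + (Y' i2 - Y' i1))) x"
      unfolding count_union count_diff using h1 h2 by arith
  qed
  define Q where "Q j i = (P (X' j + Y' i) \<le> b)" for j i
  have K: "\<And>j1 j2 i1 i2 j1' j2' i1' i2'. \<lbrakk>j1 < j2; i1 < i2; j1' < j2'; i1' < i2'; Q j1 i1; \<not> Q j2 i2; \<not> Q j1' i1'; Q j2' i2'\<rbrakk> \<Longrightarrow> False"
  proof -
    fix j1 j2 i1 i2 j1' j2' i1' i2'
    assume that: "j1 < j2" "i1 < i2" "j1' < j2'" "i1' < i2'" "Q j1 i1" "\<not> Q j2 i2" "\<not> Q j1' i1'" "Q j2' i2'"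
    define \<rho> where "\<rho> = P ((X' j2 - X' j1) + (Y' i2 - Y' i1))"
    define \<sigma> where "\<sigma> = P ((X' j2' - X' j1') + (Y' i2' - Y' i1'))"
    have e1: "P (X' j2 + Y' i2) = mult (P (X' j1 + Y' i1)) \<rho>"
      unfolding \<rho>_def by (subst decomp[OF that(1,2)]) (rule MS.union)
    have e2: "P (X' j2' + Y' i2') = mult (P (X' j1' + Y' i1')) \<sigma>"
      unfolding \<sigma>_def by (subst decomp[OF that(3,4)]) (rule MS.union)
    have "set_mset ((X' j2 - X' j1) + (Y' i2 - Y' i1)) = set_mset ((X' j2' - X' j1') + (Y' i2' - Y' i1'))"
      using sX[OF that(1)] sY[OF that(2)] sX[OF that(3)] sY[OF that(4)] by simp
    then have eq: "\<rho> \<le> e \<longleftrightarrow> \<sigma> \<le> e" unfolding \<rho>_def \<sigma>_def by (rule supp)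
    define u where "u = P (X' j1 + Y' i1)"
    define w where "w = P (X' j1' + Y' i1')"
    have ub: "u \<le> b" using that(5) by (simp add: Q_def u_def)
    have ub2: "\<not> mult u \<rho> \<le> b" using that(6) e1 by (simp add: Q_def u_def)
    have wb: "\<not> w \<le> b" using that(7) by (simp add: Q_def w_def)
    have wb2: "mult w \<sigma> \<le> b" using that(8) e2 by (simp add: Q_def w_def)
    have "\<not> \<rho> \<le> e"
    proof
      assume "\<rho> \<le> e"
      then have "mult u \<rho> \<le> mult u e" by (rule mono)
      then have "mult u \<rho> \<le> u" by (simp only: unit_r)
      then have "mult u \<rho> \<le> b" using ub by (rule order_trans)
      then show False using ub2 by simp
    qed
    then have "e \<le> \<sigma>" using eq lin by blast
    then have "mult w e \<le> mult w \<sigma>" by (rule mono)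
    then have "w \<le> mult w \<sigma>" by (simp only: unit_r)
    then have "w \<le> b" using wb2 by (rule order_trans)
    then show False using wb by simp
  qed
  have Qa: "Q j i \<longleftrightarrow> mult (a (r j)) (d (r i)) \<le> b" for i j
    by (simp add: Q_def X'_def Y'_def X Y)
  from pat show False
  proof
    assume p: "\<forall>i j. mult (a j) (d i) \<le> b \<longleftrightarrow> i < j"
    have q: "Q j i \<longleftrightarrow> i < j" for i j using p Qa r by (simp add: strict_mono_less)
    show False using K[of 1 2 0 2 0 2 0 1] q by simp
  next
    assume p: "\<forall>i j. mult (a j) (d i) \<le> b \<longleftrightarrow> j \<le> i"
    have q: "Q j i \<longleftrightarrow> j \<le> i" for i j using p Qa r by (simp add: strict_mono_less_eq)
    show False using K[of 0 2 0 1 1 2 0 2] q by simp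
  qed
qed

lemma fin_sections:
  assumes B: "finite B"
  shows "finite ((\<lambda>a. res_set mult e B a b) ` gen_monoid mult e B)"
proof (rule ccontr)
  let ?R = "\<lambda>a. res_set mult e B a b"
  let ?G = "gen_monoid mult e B"
  assume inf: "infinite (?R ` ?G)"
  have "\<exists>f::nat \<Rightarrow> 'a set. inj f \<and> range f \<subseteq> ?R ` ?G"
    using infinite_iff_countable_subset[THEN iffD1, OF inf] .
  then obtain f :: "nat \<Rightarrow> 'a set" where f0: "inj f \<and> range f \<subseteq> ?R ` ?G" by (elim exE)
  then have f: "inj f" "range f \<subseteq> ?R ` ?G" by simp_all
  have "\<forall>i. \<exists>a. a \<in> ?G \<and> f i = ?R a" using f(2) by blast
  from choice[OF this] obtain s where s: "\<forall>i. s i \<in> ?G \<and> f i = ?R (s i)" by (elim exE)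
  define g where "g i j = (?R (s i) \<subseteq> ?R (s j))" for i j :: nat
  have fU: "finite (UNIV :: bool set)" by simp
  have gU: "g i j \<in> UNIV" if "i < j" for i j by simp
  obtain r :: "nat \<Rightarrow> nat" and c where r: "strict_mono r" and hc: "\<And>i j. i < j \<Longrightarrow> g (r i) (r j) = c"
  proof (rule ramsey_subseq[OF fU gU])
    fix r0 :: "nat \<Rightarrow> nat" and c0
    assume h1: "strict_mono r0" and h2: "\<And>i j. i < j \<Longrightarrow> g (r0 i) (r0 j) = c0"
    show thesis by (rule that[OF h1 h2])
  qed
  define a where "a i = s (r i)" for i
  have aG: "a i \<in> ?G" for i using s by (simp add: a_def)
  have dist: "?R (a i) \<noteq> ?R (a j)" if "i < j" for i j
  proof
    assume "?R (a i) = ?R (a j)"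
    then have "f (r i) = f (r j)" using s by (simp add: a_def)
    then have "r i = r j" using f(1) by (simp add: inj_eq)
    moreover have "r i < r j" using r that by (simp add: strict_mono_less)
    ultimately show False by simp
  qed
  have main: "\<exists>d. (\<forall>i. d i \<in> ?G) \<and> ((\<forall>i j. mult (a j) (d i) \<le> b \<longleftrightarrow> i < j) \<or> (\<forall>i j. mult (a j) (d i) \<le> b \<longleftrightarrow> j \<le> i))"
  proof (cases c)
    case True
    have sub: "?R (a i) \<subseteq> ?R (a j)" if "i \<le> j" for i j
    proof (cases "i = j")
      case True then show ?thesis by simp
    next
      case False
      then have "i < j" using that by simp
      then show ?thesis using hc[of i j] \<open>c\<close> by (simp add: g_def a_def)
    qed
    have "\<forall>i. \<exists>x. x \<in> ?R (a (Suc i)) - ?R (a i)"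
    proof
      fix i
      have "?R (a i) \<subseteq> ?R (a (Suc i))" by (rule sub) simp
      moreover have "?R (a i) \<noteq> ?R (a (Suc i))" by (rule dist) simp
      ultimately show "\<exists>x. x \<in> ?R (a (Suc i)) - ?R (a i)" by blast
    qed
    from choice[OF this] obtain d where d: "\<forall>i. d i \<in> ?R (a (Suc i)) - ?R (a i)" by (elim exE)
    have dG: "d i \<in> ?G" for i using d by (auto simp: res_set_def)
    have iff: "mult (a j) (d i) \<le> b \<longleftrightarrow> i < j" for i j
    proof
      assume h: "mult (a j) (d i) \<le> b"
      show "i < j"
      proof (rule ccontr)
        assume "\<not> i < j" then have "j \<le> i" by simp
        then have "?R (a j) \<subseteq> ?R (a i)" by (rule sub)
        moreover have "d i \<in> ?R (a j)" using h dG by (simp add: res_set_def)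
        ultimately show False using d by blast
      qed
    next
      assume "i < j" then have "Suc i \<le> j" by simp
      then have "?R (a (Suc i)) \<subseteq> ?R (a j)" by (rule sub)
      then have "d i \<in> ?R (a j)" using d by blast
      then show "mult (a j) (d i) \<le> b" by (simp add: res_set_def)
    qed
    show ?thesis
    proof (intro exI[of _ d] conjI allI disjI1)
      fix i show "d i \<in> ?G" by (rule dG)
    next
      fix i j show "mult (a j) (d i) \<le> b \<longleftrightarrow> i < j" by (rule iff)
    qed
  next
    case False
    have sub: "?R (a j) \<subseteq> ?R (a i)" if "i \<le> j" for i j
    proof (cases "i = j")
      case True then show ?thesis by simp
    next
      case False
      then have "i < j" using that by simp
      then have "\<not> ?R (a i) \<subseteq> ?R (a j)" using hc[of i j] \<open>\<not> c\<close> by (simp add: g_def a_def)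
      then show ?thesis using chain by blast
    qed
    have "\<forall>i. \<exists>x. x \<in> ?R (a i) - ?R (a (Suc i))"
    proof
      fix i
      have "?R (a (Suc i)) \<subseteq> ?R (a i)" by (rule sub) simp
      moreover have "?R (a i) \<noteq> ?R (a (Suc i))" by (rule dist) simp
      ultimately show "\<exists>x. x \<in> ?R (a i) - ?R (a (Suc i))" by blast
    qed
    from choice[OF this] obtain d where d: "\<forall>i. d i \<in> ?R (a i) - ?R (a (Suc i))" by (elim exE)
    have dG: "d i \<in> ?G" for i using d by (auto simp: res_set_def)
    have iff: "mult (a j) (d i) \<le> b \<longleftrightarrow> j \<le> i" for i j
    proof
      assume h: "mult (a j) (d i) \<le> b"
      show "j \<le> i"
      proof (rule ccontr)
        assume "\<not> j \<le> i" then have "Suc i \<le> j" by simp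
        then have "?R (a j) \<subseteq> ?R (a (Suc i))" by (rule sub)
        moreover have "d i \<in> ?R (a j)" using h dG by (simp add: res_set_def)
        ultimately show False using d by blast
      qed
    next
      assume "j \<le> i"
      then have "?R (a i) \<subseteq> ?R (a j)" by (rule sub)
      then have "d i \<in> ?R (a j)" using d by blast
      then show "mult (a j) (d i) \<le> b" by (simp add: res_set_def)
    qed
    show ?thesis
    proof (intro exI[of _ d] conjI allI disjI2)
      fix i show "d i \<in> ?G" by (rule dG)
    next
      fix i j show "mult (a j) (d i) \<le> b \<longleftrightarrow> j \<le> i" by (rule iff)
    qed
  qed
  from main obtain d where d12: "(\<forall>i. d i \<in> ?G) \<and> ((\<forall>i j. mult (a j) (d i) \<le> b \<longleftrightarrow> i < j) \<or> (\<forall>i j. mult (a j) (d i) \<le> b \<longleftrightarrow> j \<le> i))"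
    by (rule exE)
  have dG: "\<And>i. d i \<in> ?G" using conjunct1[OF d12] by (rule spec)
  have pat: "(\<forall>i j. mult (a j) (d i) \<le> b \<longleftrightarrow> i < j) \<or> (\<forall>i j. mult (a j) (d i) \<le> b \<longleftrightarrow> j \<le> i)"
    by (rule conjunct2[OF d12])
  show False by (rule no_pattern[OF B aG dG pat])
qed

lemma fin_Dbar:
  assumes B: "finite B"
  shows "finite (Dbar mult e B)"
proof -
  have "Dbar mult e B \<subseteq> (\<Union>b\<in>B. (\<lambda>a. res_set mult e B a b) ` gen_monoid mult e B)"
    by (auto simp: Dbar_def)
  moreover have "finite (\<Union>b\<in>B. (\<lambda>a. res_set mult e B a b) ` gen_monoid mult e B)"
    using B fin_sections[OF B] by blast
  ultimately show ?thesis by (rule finite_subset)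
qed

end

lemma ULW_from:
  fixes mult imp :: "'a::bounded_lattice \<Rightarrow> 'a \<Rightarrow> 'a" and e f :: 'a
  assumes "UL_omega_algebra mult imp e f" and "\<forall>x y::'a. x \<le> y \<or> y \<le> x"
  shows "ULW mult imp e"
proof -
  have uo: "UL_algebra mult imp e f \<and> (\<forall>x. imp x e = imp (mult x x) e)"
    using assms(1) unfolding UL_omega_algebra_def .
  have u: "UL_algebra mult imp e f" by (rule conjunct1[OF uo])
  have om: "\<forall>x. imp x e = imp (mult x x) e" by (rule conjunct2[OF uo])
  have ua: "(\<forall>x y z. mult (mult x y) z = mult x (mult y z)) \<and>
     (\<forall>x y. mult x y = mult y x) \<and>
     (\<forall>x. mult e x = x) \<and>
     (\<forall>x y z. mult x y \<le> z \<longleftrightarrow> y \<le> imp x z) \<and>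
     (\<forall>x y u v. sup (lam mult imp e u (imp (sup x y) x)) (lam mult imp e v (imp (sup x y) y)) = e)"
    using u unfolding UL_algebra_def .
  have A: "\<forall>x y z. mult (mult x y) z = mult x (mult y z)" by (rule conjunct1[OF ua])
  have Cm: "\<forall>x y. mult x y = mult y x" by (rule conjunct1[OF conjunct2[OF ua]])
  have U: "\<forall>x. mult e x = x" by (rule conjunct1[OF conjunct2[OF conjunct2[OF ua]]])
  have R: "\<forall>x y z. mult x y \<le> z \<longleftrightarrow> y \<le> imp x z" by (rule conjunct1[OF conjunct2[OF conjunct2[OF conjunct2[OF ua]]]])
  show ?thesis
  proof
    fix x y z
    show "mult (mult x y) z = mult x (mult y z)" using A by blast
    show "mult x y = mult y x" using Cm by blast
    show "mult e x = x" using U by blast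
    show "mult x y \<le> z \<longleftrightarrow> y \<le> imp x z" using R by blast
    show "imp x e = imp (mult x x) e" using om by blast
    show "x \<le> y \<or> y \<le> x" using assms(2) by blast
  qed
qed

theorem lemma4p8:
  fixes mult imp :: "'a::bounded_lattice \<Rightarrow> 'a \<Rightarrow> 'a"
    and e f :: 'a and B :: "'a set"
  assumes "UL_omega_algebra mult imp e f"
    and "\<forall>x y::'a. x \<le> y \<or> y \<le> x"
    and "finite B"
    and "{e, f, bot, top} \<subseteq> B"
  shows "finite (Dset mult e B)"
proof -
  interpret U: ULW mult imp e by (rule ULW_from[OF assms(1,2)])
  have "Dset mult e B \<subseteq> (\<lambda>\<chi>. gen_monoid mult e B \<inter> \<Inter>\<chi>) ` Pow (Dbar mult e B)"
    by (auto simp: Dset_def)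
  moreover have "finite ((\<lambda>\<chi>. gen_monoid mult e B \<inter> \<Inter>\<chi>) ` Pow (Dbar mult e B))"
    using U.fin_Dbar[OF assms(3)] by simp
  ultimately show ?thesis by (rule finite_subset)
qed

end
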